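(* Let $X$ be a finite set, let $\mathcal{C}^{\ast}$ be a target clustering of $X$, and let $\gamma$ be any natural clustering error (with respect to $\mathcal{C}^{\ast}$). Then for every clustering $\mathcal{C}$ of $X$, $$\gamma(\mathcal{C},\mathcal{C}^{\ast}) \ge \delta(\mathcal{C},\mathcal{C}^{\ast}),$$ where $\delta(\mathcal{C},\mathcal{C}^{\ast}) = \mathrm{dist}(\mathcal{C}^{\ast},\mathcal{C}) + \mathrm{dist}(\mathcal{C},\mathcal{C}^{\ast})$.
   Context: A clustering of a finite set $X$ is a partition of $X$ into nonempty clusters. The target (ground-truth) clustering is $\mathcal{C}^{\ast}=\{C^{\ast}_1,\dots,C^{\ast}_k\}$. For clusterings $\mathcal{C},\mathcal{C}'$ of $X$ define $\mathrm{dist}(\mathcal{C},\mathcal{C}')=\sum_{A\in\mathcal{C}}\big(|\{B\in\mathcal{C}': B\cap A\neq\emptyset\}|-1\big)$. For a proposed clustering $\mathcal{C}$, $\delta_u=\mathrm{dist}(\mathcal{C}^{\ast},\mathcal{C})$ is its underclustering error, $\delta_o=\mathrm{dist}(\mathcal{C},\mathcal{C}^{\ast})$ its overclustering error, and $\delta(\mathcal{C},\mathcal{C}^{\ast})=\delta_u+\delta_o$. A natural clustering error is a function $\gamma$ assigning to each clustering $\mathcal{C}$ of $X$ a nonnegative integer $\gamma(\mathcal{C},\mathcal{C}^{\ast})$ such that for every clustering $\mathcal{C}$: (1) if some cluster $C_i\in\mathcal{C}$ contains points of $C^{\ast}_j$ and points of some other target cluster, then the clustering obtained by replacing $C_i$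 with the two clusters $C_i\cap C^{\ast}_j$ and $C_i\setminus C^{\ast}_j$ has strictly smaller $\gamma$; (2) if two distinct clusters of $\mathcal{C}$ both contain only points from the same target cluster, then the clustering obtained by replacing them with their union has strictly smaller $\gamma$. *)

theory Defs
  imports Main "HOL-Library.Disjoint_Sets"
begin

text \<open>A clustering of X: a partition of X into nonempty, pairwise disjoint clusters
  (library notion partition_on).\<close>

definition clust_dist :: "'a set set \<Rightarrow> 'a set set \<Rightarrow> nat" where
  "clust_dist C C' = (\<Sum>A\<in>C. card {B\<in>C'. B \<inter> A \<noteq> {}} - 1)"

definition delta_err :: "'a set set \<Rightarrow> 'a set set \<Rightarrow> nat" where
  "delta_err C Cstar = clust_dist Cstar C + clust_dist C Cstar"

text \<open>gamma C is the error gamma(C, Cstar) of clustering C w.r.t. the fixed target Cstar.\<close>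
definition natural_clustering_error :: "'a set \<Rightarrow> 'a set set \<Rightarrow> ('a set set \<Rightarrow> nat) \<Rightarrow> bool" where
  "natural_clustering_error X Cstar gamma \<longleftrightarrow>
     (\<forall>C. partition_on X C \<longrightarrow>
        (\<forall>Ci\<in>C. \<forall>Cj\<in>Cstar.
            Ci \<inter> Cj \<noteq> {} \<and> (\<exists>D\<in>Cstar. D \<noteq> Cj \<and> Ci \<inter> D \<noteq> {}) \<longrightarrow>
            gamma ((C - {Ci}) \<union> {Ci \<inter> Cj, Ci - Cj}) < gamma C)
      \<and> (\<forall>A\<in>C. \<forall>B\<in>C. A \<noteq> B \<and> (\<exists>T\<in>Cstar. A \<subseteq> T \<and> B \<subseteq> T) \<longrightarrow>
            gamma ((C - {A, B}) \<union> {A \<union> B}) < gamma C))"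

end

theory Submission
  imports Defs
begin

definition nn :: "'a set set \<Rightarrow> 'a set set \<Rightarrow> nat" where
  "nn P Q = (\<Sum>A\<in>P. card {B\<in>Q. B \<inter> A \<noteq> {}})"

lemma pdisj: "partition_on X P \<Longrightarrow> A \<in> P \<Longrightarrow> B \<in> P \<Longrightarrow> A \<noteq> B \<Longrightarrow> A \<inter> B = {}"
  unfolding partition_on_def disjoint_def disjnt_def by blast

lemma pne: "partition_on X P \<Longrightarrow> A \<in> P \<Longrightarrow> A \<noteq> {}"
  unfolding partition_on_def by blast

lemma psub: "partition_on X P \<Longrightarrow> A \<in> P \<Longrightarrow> A \<subseteq> X"
  unfolding partition_on_def by blast

lemma card_meet_ge1:
  assumes "finite X" "partition_on X P" "partition_on X Q" "A \<in> P"
  shows "card {B\<in>Q. B \<inter> A \<noteq> {}} \<ge> 1"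
proof -
  have fQ: "finite Q" using finite_elements assms by blast
  obtain x where x: "x \<in> A" using pne[OF assms(2,4)] by blast
  then have "x \<in> X" using psub[OF assms(2,4)] by blast
  then obtain B where "B \<in> Q" "x \<in> B" using assms(3) unfolding partition_on_def by blast
  then have "B \<in> {B\<in>Q. B \<inter> A \<noteq> {}}" using x by blast
  then show ?thesis using fQ
    by (metis (no_types, lifting) One_nat_def Suc_leI card_gt_0_iff empty_iff finite_subset mem_Collect_eq subsetI)
qed

lemma dist_int:
  assumes "finite X" "partition_on X P" "partition_on X Q"
  shows "int (clust_dist P Q) = int (nn P Q) - int (card P)"
proof -
  have fP: "finite P" using finite_elements assms by blast
  have "int (clust_dist P Q) = (\<Sum>A\<in>P. int (card {B\<in>Q. B \<inter> A \<noteq> {}}) - 1)"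
    unfolding clust_dist_def of_nat_sum
    by (rule sum.cong, simp, subst of_nat_diff, use card_meet_ge1[OF assms] in auto)
  also have "\<dots> = int (nn P Q) - int (card P)"
    unfolding nn_def by (simp add: sum_subtractf)
  finally show ?thesis .
qed

lemma nn_swap:
  assumes "finite X" "partition_on X P" "partition_on X Q"
  shows "nn Q P = nn P Q"
proof -
  have fP: "finite P" and fQ: "finite Q" using finite_elements assms by blast+
  have c: "\<And>S R. finite S \<Longrightarrow> card {B\<in>S. R B} = (\<Sum>B\<in>S. if R B then 1 else 0)"
    by (simp add: sum.If_cases[of _ _ "\<lambda>_. 1" "\<lambda>_. 0"] Collect_conj_eq Int_commute)
  have "nn Q P = (\<Sum>T\<in>Q. \<Sum>A\<in>P. if A \<inter> T \<noteq> {} then 1 else 0)"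
    unfolding nn_def by (rule sum.cong, simp, rule c[OF fP])
  also have "\<dots> = (\<Sum>A\<in>P. \<Sum>T\<in>Q. if A \<inter> T \<noteq> {} then 1 else 0)"
    by (rule sum.swap)
  also have "\<dots> = nn P Q"
    unfolding nn_def by (rule sum.cong, simp, subst c[OF fQ], simp add: Int_commute)
  finally show ?thesis .
qed

lemma delta_int:
  assumes "finite X" "partition_on X C" "partition_on X Cs"
  shows "int (delta_err C Cs) = 2 * int (nn C Cs) - int (card C) - int (card Cs)"
  unfolding delta_err_def using dist_int[OF assms(1,2,3)] dist_int[OF assms(1,3,2)]
    nn_swap[OF assms] by simp

lemma split_lemma:
  assumes fX: "finite X" and pC: "partition_on X C" and pS: "partition_on X Cs"
    and Ci: "Ci \<in> C" and Cj: "Cj \<in> Cs" and ne: "Ci \<inter> Cj \<noteq> {}"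
    and D: "D \<in> Cs" "D \<noteq> Cj" "Ci \<inter> D \<noteq> {}"
  shows "partition_on X ((C - {Ci}) \<union> {Ci \<inter> Cj, Ci - Cj})"
    and "int (delta_err ((C - {Ci}) \<union> {Ci \<inter> Cj, Ci - Cj}) Cs) + 1 = int (delta_err C Cs)"
proof -
  define P where "P = Ci \<inter> Cj"
  define Q where "Q = Ci - Cj"
  have DCj: "D \<inter> Cj = {}" using pdisj[OF pS D(1) Cj D(2)] .
  have Qne: "Q \<noteq> {}" using D(3) DCj unfolding Q_def by blast
  have Pne: "P \<noteq> {}" using ne P_def by simp
  have PQ: "P \<noteq> Q" using Pne unfolding P_def Q_def by blast
  have dis: "\<And>E. E \<in> C - {Ci} \<Longrightarrow> E \<inter> Ci = {}" using pdisj[OF pC] Ci by blast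
  have Pn: "P \<notin> C - {Ci}" using dis Pne unfolding P_def by blast
  have Qn: "Q \<notin> C - {Ci}" using dis Qne unfolding Q_def by blast
  have eq: "(C - {Ci}) \<union> {Ci \<inter> Cj, Ci - Cj} = insert P (insert Q (C - {Ci}))"
    unfolding P_def Q_def by blast
  have fC: "finite C" and fS: "finite Cs" using finite_elements fX pC pS by blast+
  show pC': "partition_on X ((C - {Ci}) \<union> {Ci \<inter> Cj, Ci - Cj})"
    unfolding eq
  proof (rule partition_onI)
    show "\<Union> (insert P (insert Q (C - {Ci}))) = X"
      using pC Ci unfolding partition_on_def P_def Q_def by blast
    show "{} \<notin> insert P (insert Q (C - {Ci}))" using Pne Qne pC unfolding partition_on_def by blast
    fix E F assume E: "E \<in> insert P (insert Q (C - {Ci}))"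
        and F: "F \<in> insert P (insert Q (C - {Ci}))" and EF: "E \<noteq> F"
    have PQd: "P \<inter> Q = {}" "P \<subseteq> Ci" "Q \<subseteq> Ci" unfolding P_def Q_def by blast+
    have d2: "\<And>G H. G \<in> C - {Ci} \<Longrightarrow> H \<in> C - {Ci} \<Longrightarrow> G \<noteq> H \<Longrightarrow> G \<inter> H = {}"
      using pdisj[OF pC] by blast
    have "E \<inter> F = {}"
      using E F EF PQd d2 dis by blast
    then show "disjnt E F" unfolding disjnt_def .
  qed
  let ?f = "\<lambda>E. card {B\<in>Cs. B \<inter> E \<noteq> {}}"
  have fP: "?f P = 1"
  proof -
    have "{B\<in>Cs. B \<inter> P \<noteq> {}} = {Cj}"
      using Cj Pne pdisj[OF pS _ Cj] unfolding P_def by blast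
    then show ?thesis by simp
  qed
  have fQ: "?f Q + 1 = ?f Ci"
  proof -
    have e: "{B\<in>Cs. B \<inter> Q \<noteq> {}} = {B\<in>Cs. B \<inter> Ci \<noteq> {}} - {Cj}"
      using pdisj[OF pS _ Cj] unfolding Q_def by blast
    have "Cj \<in> {B\<in>Cs. B \<inter> Ci \<noteq> {}}" using Cj ne by blast
    moreover have "finite {B\<in>Cs. B \<inter> Ci \<noteq> {}}" using fS by simp
    ultimately show ?thesis unfolding e
      by (metis (no_types, lifting) Suc_eq_plus1 card_Suc_Diff1)
  qed
  have n1: "nn (insert P (insert Q (C - {Ci}))) Cs = ?f P + ?f Q + nn (C - {Ci}) Cs"
    unfolding nn_def using fC Pn Qn PQ by (simp add: sum.insert)
  have n2: "nn C Cs = ?f Ci + nn (C - {Ci}) Cs"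
    unfolding nn_def using fC Ci by (simp add: sum.remove)
  have c1: "card (insert P (insert Q (C - {Ci}))) = card C + 1"
  proof -
    have "card C > 0" using fC Ci card_gt_0_iff by blast
    moreover have "card (C - {Ci}) = card C - 1" using fC Ci by (simp add: card_Diff_singleton)
    moreover have "card (insert P (insert Q (C - {Ci}))) = card (C - {Ci}) + 2"
      using fC Pn Qn PQ by simp
    ultimately show ?thesis by simp
  qed
  show "int (delta_err ((C - {Ci}) \<union> {Ci \<inter> Cj, Ci - Cj}) Cs) + 1 = int (delta_err C Cs)"
  proof -
    have "int (nn (insert P (insert Q (C - {Ci}))) Cs) = int (nn C Cs)"
      using n1 n2 fP fQ by simp
    then show ?thesis using delta_int[OF fX pC' pS] delta_int[OF fX pC pS] c1 unfolding eq by linarith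
  qed
qed

lemma merge_lemma:
  assumes fX: "finite X" and pC: "partition_on X C" and pS: "partition_on X Cs"
    and A: "A \<in> C" and B: "B \<in> C" and AB: "A \<noteq> B" and T: "T \<in> Cs" "A \<subseteq> T" "B \<subseteq> T"
  shows "partition_on X ((C - {A, B}) \<union> {A \<union> B})"
    and "int (delta_err ((C - {A, B}) \<union> {A \<union> B}) Cs) + 1 = int (delta_err C Cs)"
proof -
  have Ane: "A \<noteq> {}" and Bne: "B \<noteq> {}" using pne[OF pC] A B by auto
  have dis: "\<And>E. E \<in> C - {A, B} \<Longrightarrow> E \<inter> A = {} \<and> E \<inter> B = {}" using pdisj[OF pC] A B by blast
  have Un: "A \<union> B \<notin> C - {A, B}" using dis Ane by blast
  have eq: "(C - {A, B}) \<union> {A \<union> B} = insert (A \<union> B) (C - {A, B})" by blast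
  have fC: "finite C" and fS: "finite Cs" using finite_elements fX pC pS by blast+
  show pC': "partition_on X ((C - {A, B}) \<union> {A \<union> B})"
    unfolding eq
  proof (rule partition_onI)
    show "\<Union> (insert (A \<union> B) (C - {A, B})) = X"
      using pC A B unfolding partition_on_def by blast
    show "{} \<notin> insert (A \<union> B) (C - {A, B})" using Ane pC unfolding partition_on_def by blast
    fix E F assume E: "E \<in> insert (A \<union> B) (C - {A, B})"
        and F: "F \<in> insert (A \<union> B) (C - {A, B})" and EF: "E \<noteq> F"
    have d2: "\<And>G H. G \<in> C - {A, B} \<Longrightarrow> H \<in> C - {A, B} \<Longrightarrow> G \<noteq> H \<Longrightarrow> G \<inter> H = {}"
      using pdisj[OF pC] by blast
    have "E \<inter> F = {}"
      using E F EF d2 dis by blast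
    then show "disjnt E F" unfolding disjnt_def .
  qed
  let ?f = "\<lambda>E. card {B\<in>Cs. B \<inter> E \<noteq> {}}"
  have f1: "?f E = 1" if "E \<subseteq> T" "E \<noteq> {}" for E
  proof -
    have "{B\<in>Cs. B \<inter> E \<noteq> {}} = {T}"
      using T that pdisj[OF pS _ T(1)] by blast
    then show ?thesis by simp
  qed
  have n1: "nn (insert (A \<union> B) (C - {A, B})) Cs = ?f (A \<union> B) + nn (C - {A, B}) Cs"
    unfolding nn_def using fC Un by (simp add: sum.insert)
  have n2: "nn C Cs = ?f A + ?f B + nn (C - {A, B}) Cs"
  proof -
    have "nn C Cs = ?f A + nn (C - {A}) Cs" unfolding nn_def using fC A by (simp add: sum.remove)
    moreover have "nn (C - {A}) Cs = ?f B + nn (C - {A} - {B}) Cs"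
      unfolding nn_def by (rule sum.remove) (use fC B AB in auto)
    moreover have "C - {A} - {B} = C - {A, B}" by blast
    ultimately show ?thesis by simp
  qed
  have c1: "card (insert (A \<union> B) (C - {A, B})) + 1 = card C"
  proof -
    have "card (C - {A, B}) + 2 = card C"
    proof -
      have "card (C - {A}) = card C - 1" using A fC by (simp add: card_Diff_singleton)
      moreover have "card (C - {A} - {B}) = card (C - {A}) - 1" using B AB fC by (simp add: card_Diff_singleton)
      moreover have "card C \<ge> 2"
      proof -
        have "{A, B} \<subseteq> C" using A B by blast
        then have "card {A, B} \<le> card C" using fC card_mono by blast
        then show ?thesis using AB by simp
      qed
      moreover have "C - {A} - {B} = C - {A, B}" by blast
      ultimately show ?thesis by simp
    qed
    then show ?thesis using fC Un by simp
  qed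
  show "int (delta_err ((C - {A, B}) \<union> {A \<union> B}) Cs) + 1 = int (delta_err C Cs)"
  proof -
    have fU: "?f (A \<union> B) = 1" by (rule f1) (use T Ane in auto)
    have "int (nn (insert (A \<union> B) (C - {A, B})) Cs) + 1 = int (nn C Cs)"
      using n1 n2 fU f1[OF T(2) Ane] f1[OF T(3) Bne] by simp
    then show ?thesis using delta_int[OF fX pC' pS] delta_int[OF fX pC pS] c1 unfolding eq by linarith
  qed
qed


lemma zero_case:
  assumes fX: "finite X" and pC: "partition_on X C" and pS: "partition_on X Cs"
    and nsplit: "\<not> (\<exists>Ci\<in>C. \<exists>Cj\<in>Cs. Ci \<inter> Cj \<noteq> {} \<and> (\<exists>D\<in>Cs. D \<noteq> Cj \<and> Ci \<inter> D \<noteq> {}))"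
    and nmerge: "\<not> (\<exists>A\<in>C. \<exists>B\<in>C. A \<noteq> B \<and> (\<exists>T\<in>Cs. A \<subseteq> T \<and> B \<subseteq> T))"
  shows "delta_err C Cs = 0"
proof -
  have fC: "finite C" and fS: "finite Cs" using finite_elements fX pC pS by blast+
  have sub: "A \<subseteq> T" if A: "A \<in> C" and T: "T \<in> Cs" and AT: "A \<inter> T \<noteq> {}" for A T
  proof
    fix x assume x: "x \<in> A"
    then have "x \<in> X" using psub[OF pC A] by blast
    then obtain T' where T': "T' \<in> Cs" "x \<in> T'" using pS unfolding partition_on_def by blast
    have "T' = T"
    proof (rule ccontr)
      assume "T' \<noteq> T"
      then have "\<exists>Ci\<in>C. \<exists>Cj\<in>Cs. Ci \<inter> Cj \<noteq> {} \<and> (\<exists>D\<in>Cs. D \<noteq> Cj \<and> Ci \<inter> D \<noteq> {})"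
        using A T AT T' x by blast
      then show False using nsplit by (rule notE[rotated])
    qed
    then show "x \<in> T" using T' by simp
  qed
  have d1: "clust_dist C Cs = 0"
    unfolding clust_dist_def
  proof (rule sum.neutral, rule ballI)
    fix A assume A: "A \<in> C"
    have "\<forall>a1\<in>{B\<in>Cs. B \<inter> A \<noteq> {}}. \<forall>a2\<in>{B\<in>Cs. B \<inter> A \<noteq> {}}. a1 = a2"
    proof (intro ballI, rule ccontr)
      fix a1 a2 assume a1: "a1 \<in> {B\<in>Cs. B \<inter> A \<noteq> {}}" and a2: "a2 \<in> {B\<in>Cs. B \<inter> A \<noteq> {}}"
        and ne: "a1 \<noteq> a2"
      have "\<exists>Ci\<in>C. \<exists>Cj\<in>Cs. Ci \<inter> Cj \<noteq> {} \<and> (\<exists>D\<in>Cs. D \<noteq> Cj \<and> Ci \<inter> D \<noteq> {})"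
        using A a1 a2 ne by blast
      then show False using nsplit by (rule notE[rotated])
    qed
    then have "card {B\<in>Cs. B \<inter> A \<noteq> {}} \<le> Suc 0"
      using fS by (subst card_le_Suc0_iff_eq) auto
    then show "card {B\<in>Cs. B \<inter> A \<noteq> {}} - 1 = 0" by simp
  qed
  have d2: "clust_dist Cs C = 0"
    unfolding clust_dist_def
  proof (rule sum.neutral, rule ballI)
    fix T assume T: "T \<in> Cs"
    have "\<forall>a1\<in>{B\<in>C. B \<inter> T \<noteq> {}}. \<forall>a2\<in>{B\<in>C. B \<inter> T \<noteq> {}}. a1 = a2"
    proof (intro ballI)
      fix a1 a2 assume a1: "a1 \<in> {B\<in>C. B \<inter> T \<noteq> {}}" and a2: "a2 \<in> {B\<in>C. B \<inter> T \<noteq> {}}"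
      have "a1 \<subseteq> T" "a2 \<subseteq> T" using sub T a1 a2 by auto
      show "a1 = a2"
      proof (rule ccontr)
        assume "a1 \<noteq> a2"
        then have "\<exists>A\<in>C. \<exists>B\<in>C. A \<noteq> B \<and> (\<exists>T\<in>Cs. A \<subseteq> T \<and> B \<subseteq> T)"
          using a1 a2 T \<open>a1 \<subseteq> T\<close> \<open>a2 \<subseteq> T\<close> by blast
        then show False using nmerge by (rule notE[rotated])
      qed
    qed
    then have "card {B\<in>C. B \<inter> T \<noteq> {}} \<le> Suc 0"
      using fC by (subst card_le_Suc0_iff_eq) auto
    then show "card {B\<in>C. B \<inter> T \<noteq> {}} - 1 = 0" by simp
  qed
  show ?thesis unfolding delta_err_def using d1 d2 by simp
qed

theorem theorem8:
  fixes X :: "'a set" and Cstar :: "'a set set" and gamma :: "'a set set \<Rightarrow> nat"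
  assumes "finite X"
    and "partition_on X Cstar"
    and "natural_clustering_error X Cstar gamma"
    and "partition_on X C"
  shows "gamma C \<ge> delta_err C Cstar"
proof -
  have main: "\<forall>C. partition_on X C \<longrightarrow> gamma C = n \<longrightarrow> delta_err C Cstar \<le> gamma C" for n
  proof (induction n rule: less_induct)
    case (less n)
    show ?case
    proof (intro allI impI)
      fix C assume pC: "partition_on X C" and gn: "gamma C = n"
      note H = assms(3)[unfolded natural_clustering_error_def, THEN spec[of _ C], THEN mp, OF pC]
      note sp = conjunct1[OF H, rule_format]
      note mg = conjunct2[OF H, rule_format]
      show "delta_err C Cstar \<le> gamma C"
      proof (cases "\<exists>Ci\<in>C. \<exists>Cj\<in>Cstar. Ci \<inter> Cj \<noteq> {} \<and> (\<exists>D\<in>Cstar. D \<noteq> Cj \<and> Ci \<inter> D \<noteq> {})")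
        case True
        then obtain Ci Cj D where Ci: "Ci \<in> C" and Cj: "Cj \<in> Cstar" and ne: "Ci \<inter> Cj \<noteq> {}"
          and D: "D \<in> Cstar" "D \<noteq> Cj" "Ci \<inter> D \<noteq> {}" by blast
        have lt: "gamma ((C - {Ci}) \<union> {Ci \<inter> Cj, Ci - Cj}) < gamma C"
          by (rule sp[OF Ci Cj]) (use ne D in blast)
        have p': "partition_on X ((C - {Ci}) \<union> {Ci \<inter> Cj, Ci - Cj})"
          by (rule split_lemma(1)[OF assms(1) pC assms(2) Ci Cj ne D])
        have e: "int (delta_err ((C - {Ci}) \<union> {Ci \<inter> Cj, Ci - Cj}) Cstar) + 1 = int (delta_err C Cstar)"
          by (rule split_lemma(2)[OF assms(1) pC assms(2) Ci Cj ne D])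
        have "delta_err ((C - {Ci}) \<union> {Ci \<inter> Cj, Ci - Cj}) Cstar \<le> gamma ((C - {Ci}) \<union> {Ci \<inter> Cj, Ci - Cj})"
          using less.IH[OF lt[unfolded gn]] p' by blast
        then show ?thesis using e lt by linarith
      next
        case nsplit: False
        show ?thesis
        proof (cases "\<exists>A\<in>C. \<exists>B\<in>C. A \<noteq> B \<and> (\<exists>T\<in>Cstar. A \<subseteq> T \<and> B \<subseteq> T)")
          case True
          then obtain A B T where A: "A \<in> C" and B: "B \<in> C" and AB: "A \<noteq> B"
            and T: "T \<in> Cstar" "A \<subseteq> T" "B \<subseteq> T" by blast
          have lt: "gamma ((C - {A, B}) \<union> {A \<union> B}) < gamma C"
            by (rule mg[OF A B]) (use AB T in blast)
          have p': "partition_on X ((C - {A, B}) \<union> {A \<union> B})"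
            by (rule merge_lemma(1)[OF assms(1) pC assms(2) A B AB T])
          have e: "int (delta_err ((C - {A, B}) \<union> {A \<union> B}) Cstar) + 1 = int (delta_err C Cstar)"
            by (rule merge_lemma(2)[OF assms(1) pC assms(2) A B AB T])
          have "delta_err ((C - {A, B}) \<union> {A \<union> B}) Cstar \<le> gamma ((C - {A, B}) \<union> {A \<union> B})"
            using less.IH[OF lt[unfolded gn]] p' by blast
          then show ?thesis using e lt by linarith
        next
          case False
          then show ?thesis using zero_case[OF assms(1) pC assms(2) nsplit] by simp
        qed
      qed
    qed
  qed
  show ?thesis using main assms(4) by blast
qed

end
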